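(* Let $n\ge 1$ and let $P$ be the $n\times n$ matrix with entries $P_{ij}=\frac{1}{i}$ if $j\ge n-i+1$ and $P_{ij}=0$ otherwise (so row $i$ has the value $1/i$ in its last $i$ positions and zeros elsewhere). Then the eigenvalues of $P$ are exactly $\lambda_i(P)=\frac{(-1)^{i+1}}{i}$ for $i=1,\ldots,n$.
   Context: $P$ is a row-stochastic "anti-lower-triangular" matrix: the first row is $(0,\dots,0,1)$, the second is $(0,\dots,0,\tfrac12,\tfrac12)$, ..., the last row is $(\tfrac1n,\dots,\tfrac1n)$. *)

theory Defs
  imports Complex_Main "Jordan_Normal_Form.Char_Poly"
begin

text \<open>The n x n matrix P (0-based indices i, j < n): row i (paper's row i+1)
  has the value 1/(i+1) in its last i+1 positions, i.e. where i + j >= n - 1.\<close>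
definition antiP :: "nat \<Rightarrow> real mat" where
  "antiP n = mat n n (\<lambda>(i, j). if n - 1 \<le> i + j then 1 / real (i + 1) else 0)"

end

theory Submission
  imports Defs
begin

lemma refl_id:
  "i \<le> N \<Longrightarrow> int ((N - i) choose k) = (\<Sum>l\<le>k. (-1)^l * int (i choose l) * int ((N - l) choose (k - l)))"
proof (induction i arbitrary: N k)
  case 0
  have "(\<Sum>l\<le>k. (-1)^l * int (0 choose l) * int ((N - l) choose (k - l)))
      = (\<Sum>l\<le>k. if l = 0 then int (N choose k) else 0)"
    by (rule sum.cong) auto
  then show ?case by simp
next
  case (Suc i)
  show ?case
  proof (cases k)
    case 0 then show ?thesis by simp
  next
    case (Suc k')
    have IH1: "int ((N - i) choose Suc k') = (\<Sum>l\<le>Suc k'. (-1)^l * int (i choose l) * int ((N - l) choose (Suc k' - l)))"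
      using Suc.IH[of N "Suc k'"] Suc.prems by simp
    have IH2: "int ((N - 1 - i) choose k') = (\<Sum>l\<le>k'. (-1)^l * int (i choose l) * int ((N - 1 - l) choose (k' - l)))"
      using Suc.IH[of "N - 1" k'] Suc.prems by simp
    have S1: "(\<Sum>l\<le>Suc k'. (-1)^l * int (i choose l) * int ((N - l) choose (Suc k' - l)))
        = int (N choose Suc k') - (\<Sum>l\<le>k'. (-1)^l * int (i choose Suc l) * int ((N - Suc l) choose (k' - l)))"
      by (simp add: sum.atMost_Suc_shift sum_negf del: sum.atMost_Suc)
    have "(\<Sum>l\<le>Suc k'. (-1)^l * int (Suc i choose l) * int ((N - l) choose (Suc k' - l)))
        = int (N choose Suc k') - (\<Sum>l\<le>k'. (-1)^l * int (Suc i choose Suc l) * int ((N - Suc l) choose (k' - l)))"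
      by (simp add: sum.atMost_Suc_shift sum_negf del: sum.atMost_Suc)
    also have "(\<Sum>l\<le>k'. (-1)^l * int (Suc i choose Suc l) * int ((N - Suc l) choose (k' - l)))
       = (\<Sum>l\<le>k'. (-1)^l * int (i choose l) * int ((N - 1 - l) choose (k' - l)))
         + (\<Sum>l\<le>k'. (-1)^l * int (i choose Suc l) * int ((N - Suc l) choose (k' - l)))"
      by (simp add: sum.distrib[symmetric] algebra_simps)
    finally have "(\<Sum>l\<le>Suc k'. (-1)^l * int (Suc i choose l) * int ((N - l) choose (Suc k' - l)))
       = int ((N - i) choose Suc k') - int ((N - 1 - i) choose k')"
      using IH1 IH2 S1 by linarith
    moreover have "N - i = Suc (N - Suc i)" using Suc.prems by simp
    ultimately show ?thesis using Suc by simp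
  qed
qed


definition Bm :: "nat \<Rightarrow> real mat" where "Bm n = mat n n (\<lambda>(i,k). real (i choose k))"
definition Cm :: "nat \<Rightarrow> real mat" where "Cm n = mat n n (\<lambda>(i,k). if k \<le> i then 1 / real (i+1) else 0)"
definition Jm :: "nat \<Rightarrow> real mat" where "Jm n = mat n n (\<lambda>(i,k). if i + k = n - 1 then 1 else 0)"
definition Dm :: "nat \<Rightarrow> real mat" where "Dm n = mat n n (\<lambda>(i,k). if i = k then 1 / real (k+1) else 0)"
definition Um :: "nat \<Rightarrow> real mat" where "Um n = mat n n (\<lambda>(l,k). if l \<le> k then (-1)^l * real ((n - 1 - l) choose (k - l)) else 0)"
definition Tm :: "nat \<Rightarrow> real mat" where "Tm n = mat n n (\<lambda>(l,k). if l \<le> k then (-1)^l * real ((n - 1 - l) choose (k - l)) / real (l+1) else 0)"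

lemma carr: "Bm n \<in> carrier_mat n n" "Cm n \<in> carrier_mat n n" "Jm n \<in> carrier_mat n n"
  "Dm n \<in> carrier_mat n n" "Um n \<in> carrier_mat n n" "Tm n \<in> carrier_mat n n"
  "antiP n \<in> carrier_mat n n"
  by (auto simp: Bm_def Cm_def Jm_def Dm_def Um_def Tm_def antiP_def)


lemma sum_if_eq: "j < (n::nat) \<Longrightarrow> (\<Sum>m\<in>{0..<n}. if m = j then f m else 0) = (f j :: real)"
proof -
  assume j: "j < n"
  have "(\<Sum>m\<in>{0..<n}. if m = j then f m else 0) = (\<Sum>m\<in>{0..<n}. if m = j then f j else 0)"
    by (rule sum.cong) auto
  also have "\<dots> = f j" using j by (subst sum.delta) auto
  finally show ?thesis .
qed

lemma sum_restr: "i < (n::nat) \<Longrightarrow> (\<And>m. i < m \<Longrightarrow> f m = 0) \<Longrightarrow> (\<Sum>m\<in>{0..<n}. f m) = (\<Sum>m\<le>i. f m :: real)"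
  by (rule sum.mono_neutral_right) (auto simp: not_le)

lemma P_CJ: "antiP n = Cm n * Jm n"
proof (rule eq_matI)
  fix i j assume ij: "i < dim_row (Cm n * Jm n)" "j < dim_col (Cm n * Jm n)"
  hence i: "i < n" and j: "j < n" by (auto simp: Cm_def Jm_def)
  have "(Cm n * Jm n) $$ (i,j) = (\<Sum>m\<in>{0..<n}. (if m \<le> i then 1 / real (i+1) else 0) * (if m + j = n - 1 then 1 else 0))"
    using i j by (simp add: Cm_def Jm_def scalar_prod_def)
  also have "\<dots> = (\<Sum>m\<in>{0..<n}. if m = n - 1 - j then (if m \<le> i then 1 / real (i+1) else 0) else 0)"
    by (rule sum.cong) (use j in auto)
  also have "\<dots> = (if n - 1 - j \<le> i then 1 / real (i+1) else 0)"
    using j by (subst sum_if_eq) auto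
  also have "\<dots> = antiP n $$ (i,j)" using i j by (auto simp: antiP_def)
  finally show "antiP n $$ (i,j) = (Cm n * Jm n) $$ (i,j)" by simp
qed (auto simp: antiP_def Cm_def Jm_def)

lemma CB: "Cm n * Bm n = Bm n * Dm n"
proof (rule eq_matI)
  fix i j assume ij: "i < dim_row (Bm n * Dm n)" "j < dim_col (Bm n * Dm n)"
  hence i: "i < n" and j: "j < n" by (auto simp: Bm_def Dm_def)
  have "(Cm n * Bm n) $$ (i,j) = (\<Sum>m\<in>{0..<n}. (if m \<le> i then 1 / real (i+1) else 0) * real (m choose j))"
    using i j by (simp add: Cm_def Bm_def scalar_prod_def)
  also have "\<dots> = (\<Sum>m\<in>{..i}. real (m choose j)) / real (i+1)"
    using i by (subst sum_restr[of i]) (auto simp: sum_divide_distrib intro!: sum.cong)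
  also have "\<dots> = real (Suc i choose Suc j) / real (i+1)"
    by (metis of_nat_sum sum_choose_upper)
  also have "\<dots> = real (i choose j) / real (j+1)"
  proof -
    have "real (Suc i) * real (i choose j) = real (Suc i choose Suc j) * real (Suc j)"
      by (metis Suc_times_binomial_eq of_nat_mult)
    then show ?thesis by (simp add: field_simps)
  qed
  also have "\<dots> = (\<Sum>m\<in>{0..<n}. if m = j then real (i choose m) * (1 / real (j+1)) else 0)"
    using j by (subst sum_if_eq) auto
  also have "\<dots> = (\<Sum>m\<in>{0..<n}. real (i choose m) * (if m = j then 1 / real (j+1) else 0))"
    by (rule sum.cong) auto
  also have "\<dots> = (Bm n * Dm n) $$ (i,j)"
    using i j by (simp add: Bm_def Dm_def scalar_prod_def)
  finally show "(Cm n * Bm n) $$ (i,j) = (Bm n * Dm n) $$ (i,j)" .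
qed (auto simp: Bm_def Cm_def Dm_def)

lemma JB: "Jm n * Bm n = Bm n * Um n"
proof (rule eq_matI)
  fix i j assume ij: "i < dim_row (Bm n * Um n)" "j < dim_col (Bm n * Um n)"
  hence i: "i < n" and j: "j < n" by (auto simp: Bm_def Um_def)
  have "(Jm n * Bm n) $$ (i,j) = (\<Sum>m\<in>{0..<n}. (if i + m = n - 1 then 1 else 0) * real (m choose j))"
    using i j by (simp add: Jm_def Bm_def scalar_prod_def)
  also have "\<dots> = (\<Sum>m\<in>{0..<n}. if m = n - 1 - i then real (m choose j) else 0)"
    by (rule sum.cong) (use i in auto)
  also have "\<dots> = real ((n - 1 - i) choose j)"
    using i by (subst sum_if_eq) auto
  also have "\<dots> = (\<Sum>l\<le>j. (-1)^l * real (i choose l) * real ((n - 1 - l) choose (j - l)))"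
  proof -
    have "int ((n - 1 - i) choose j) = (\<Sum>l\<le>j. (-1)^l * int (i choose l) * int ((n - 1 - l) choose (j - l)))"
      using i by (intro refl_id) simp
    then have "real_of_int (int ((n - 1 - i) choose j)) = real_of_int (\<Sum>l\<le>j. (-1)^l * int (i choose l) * int ((n - 1 - l) choose (j - l)))"
      by simp
    then show ?thesis by simp
  qed
  also have "\<dots> = (\<Sum>l\<in>{0..<n}. real (i choose l) * (if l \<le> j then (-1)^l * real ((n - 1 - l) choose (j - l)) else 0))"
    using j by (subst sum_restr[of j]) (auto intro!: sum.cong)
  also have "\<dots> = (Bm n * Um n) $$ (i,j)"
    using i j by (auto simp: Bm_def Um_def scalar_prod_def intro!: sum.cong)
  finally show "(Jm n * Bm n) $$ (i,j) = (Bm n * Um n) $$ (i,j)" .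
qed (auto simp: Bm_def Jm_def Um_def)

lemma DU: "Dm n * Um n = Tm n"
proof (rule eq_matI)
  fix i j assume ij: "i < dim_row (Tm n)" "j < dim_col (Tm n)"
  hence i: "i < n" and j: "j < n" by (auto simp: Tm_def)
  have "(Dm n * Um n) $$ (i,j) = (\<Sum>m\<in>{0..<n}. (if i = m then 1 / real (m+1) else 0) * (if m \<le> j then (-1)^m * real ((n - 1 - m) choose (j - m)) else 0))"
    using i j by (simp add: Dm_def Um_def scalar_prod_def)
  also have "\<dots> = (\<Sum>m\<in>{0..<n}. if m = i then 1 / real (m+1) * (if m \<le> j then (-1)^m * real ((n - 1 - m) choose (j - m)) else 0) else 0)"
    by (rule sum.cong) auto
  also have "\<dots> = Tm n $$ (i,j)" using i j by (subst sum_if_eq) (auto simp: Tm_def)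
  finally show "(Dm n * Um n) $$ (i,j) = Tm n $$ (i,j)" .
qed (auto simp: Dm_def Um_def Tm_def)

lemma PB: "antiP n * Bm n = Bm n * Tm n"
proof -
  note c = carr[of n]
  have "antiP n * Bm n = Cm n * (Jm n * Bm n)" using c by (simp add: P_CJ assoc_mult_mat[of _ n n _ n _ n])
  also have "\<dots> = (Cm n * Bm n) * Um n" using c by (simp add: JB assoc_mult_mat[of _ n n _ n _ n])
  also have "\<dots> = Bm n * (Dm n * Um n)" using c by (simp add: CB assoc_mult_mat[of _ n n _ n _ n])
  finally show ?thesis by (simp add: DU)
qed

lemma detB: "det (Bm n) = 1"
proof -
  have "det (Bm n) = prod_list (diag_mat (Bm n))"
    by (rule det_lower_triangular[of n]) (auto simp: Bm_def)
  also have "\<dots> = 1" by (simp add: prod_list_diag_prod Bm_def)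
  finally show ?thesis .
qed

lemma sim: "similar_mat (antiP n) (Tm n)"
proof -
  note c = carr[of n]
  have "Bm n \<in> Units (ring_mat TYPE(real) n b)"
    by (rule det_non_zero_imp_unit[OF c(1)]) (simp add: detB)
  then obtain Q where Q: "Q \<in> carrier_mat n n" "Q * Bm n = 1\<^sub>m n" "Bm n * Q = 1\<^sub>m n"
    by (auto simp: Units_def ring_mat_def)
  have "antiP n = antiP n * (Bm n * Q)" using Q c by simp
  also have "\<dots> = (antiP n * Bm n) * Q" using Q c by (simp add: assoc_mult_mat[of _ n n _ n _ n])
  also have "\<dots> = Bm n * Tm n * Q" by (simp add: PB)
  finally show ?thesis
    by (intro similar_matI[where P="Bm n" and Q=Q]) (use Q c in auto)
qed

lemma charT: "char_poly (Tm n) = (\<Prod>l = 0..<n. [: - ((-1)^l / real (l+1)), 1 :])"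
proof -
  have "char_poly (Tm n) = (\<Prod> a \<leftarrow> diag_mat (Tm n). [:- a, 1:])"
    by (rule char_poly_upper_triangular[OF carr(6)]) (auto simp: upper_triangular_def Tm_def)
  also have "\<dots> = (\<Prod>l = 0..<n. [: - ((-1)^l / real (l+1)), 1 :])"
    by (simp add: diag_mat_def Tm_def prod.list_conv_set_nth comp_def)
  finally show ?thesis .
qed

theorem proposition1:
  fixes n :: nat
  assumes "n \<ge> 1"
  shows "char_poly (antiP n) = (\<Prod>i = 1..n. [: - ((-1) ^ (i + 1) / real i), 1 :])
       \<and> {k :: complex. eigenvalue (map_mat complex_of_real (antiP n)) k}
           = {complex_of_real ((-1) ^ (i + 1) / real i) | i. 1 \<le> i \<and> i \<le> n}"
proof -
  have cp: "char_poly (antiP n) = (\<Prod>i = 1..n. [: - ((-1) ^ (i + 1) / real i), 1 :])"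
  proof -
    have "char_poly (antiP n) = (\<Prod>l = 0..<n. [: - ((-1)^l / real (l+1)), 1 :])"
      using char_poly_similar[OF sim] charT by simp
    also have "\<dots> = (\<Prod>i = Suc 0..<Suc n. [: - ((-1) ^ (i + 1) / real i), 1 :])"
      by (subst prod.shift_bounds_Suc_ivl) simp
    also have "{Suc 0..<Suc n} = {1..n}" by auto
    finally show ?thesis .
  qed
  interpret h: map_poly_comm_ring_hom "complex_of_real" ..
  have "{k :: complex. eigenvalue (map_mat complex_of_real (antiP n)) k}
      = {k. (\<Prod>i = 1..n. k - complex_of_real ((-1) ^ (i + 1) / real i)) = 0}"
  proof -
    have c: "map_mat complex_of_real (antiP n) \<in> carrier_mat n n" using carr(7)[of n] by simp
    have "\<And>k. eigenvalue (map_mat complex_of_real (antiP n)) k \<longleftrightarrow>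
        (\<Prod>i = 1..n. k - complex_of_real ((-1) ^ (i + 1) / real i)) = 0"
    proof -
      fix k :: complex
      have "eigenvalue (map_mat complex_of_real (antiP n)) k \<longleftrightarrow> poly (char_poly (map_mat complex_of_real (antiP n))) k = 0"
        by (rule eigenvalue_root_char_poly[OF c])
      also have "char_poly (map_mat complex_of_real (antiP n)) = map_poly complex_of_real (char_poly (antiP n))"
        by (rule of_real_hom.char_poly_hom[OF carr(7)])
      also have "\<dots> = (\<Prod>i = 1..n. [: - complex_of_real ((-1) ^ (i + 1) / real i), 1 :])"
        unfolding cp h.hom_prod by simp
      also have "poly \<dots> k = (\<Prod>i = 1..n. k - complex_of_real ((-1) ^ (i + 1) / real i))"
        by (simp add: poly_prod add.commute)
      finally show "eigenvalue (map_mat complex_of_real (antiP n)) k \<longleftrightarrow>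
        (\<Prod>i = 1..n. k - complex_of_real ((-1) ^ (i + 1) / real i)) = 0" .
    qed
    then show ?thesis by blast
  qed
  also have "\<dots> = {complex_of_real ((-1) ^ (i + 1) / real i) | i. 1 \<le> i \<and> i \<le> n}"
    by (auto simp: prod_zero_iff eq_neg_iff_add_eq_0)
  finally show ?thesis using cp by simp
qed
end
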